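(* Let $G=\mathbb{R}\ltimes\mathbb{R}^2$, where $t\in\mathbb{R}$ acts on $\mathbb{R}^2$ by rotation through angle $2\pi t$. Let $\varrho=\begin{bmatrix}1&0\\0&-1\end{bmatrix}$ and define $\varphi(t,x)=(-t,2\varrho x)$ for $t\in\mathbb{R}$, $x\in\mathbb{R}^2$. Then $\varphi$ is a continuous automorphism of $G$ with $R(\varphi)=1$, and the automorphism $\varphi_1$ it induces on $G/Z(G)\cong \mathrm{SO}(2,\mathbb{R})\ltimes\mathbb{R}^2$ (standard action) also satisfies $R(\varphi_1)=1$. Consequently neither $\mathbb{R}\ltimes\mathbb{R}^2$ nor $\mathrm{SO}(2,\mathbb{R})\ltimes\mathbb{R}^2$ (with these actions) has the topological $R_\infty$-property.
   Context: For an automorphism $\varphi$ of a group $G$, the $\varphi$-twisted conjugacy classes are the equivalence classes of the relation $x\sim_\varphi y$ iff $y=gx\varphi(g)^{-1}$ for some $g\in G$; $R(\varphi)\in\mathbb{N}\cup\{\infty\}$ is their number. $Z(G)$ is the center of $G$ (here the subgroup $\{(k,0):k\in\mathbb{Z}\}$). A topological group $G$ has the topological $R_\infty$-property if $R(\varphi)=\infty$ for every automorphism $\varphi$ of $G$ that is a homeomorphism. *)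

theory Defs
  imports "HOL-Analysis.Analysis" "HOL-Algebra.Algebra"
begin

definition twisted_rel :: "('a, 'b) monoid_scheme \<Rightarrow> ('a \<Rightarrow> 'a) \<Rightarrow> ('a \<times> 'a) set" where
  "twisted_rel G \<phi> = {(x, y). x \<in> carrier G \<and> y \<in> carrier G \<and>
      (\<exists>g \<in> carrier G. y = g \<otimes>\<^bsub>G\<^esub> x \<otimes>\<^bsub>G\<^esub> inv\<^bsub>G\<^esub> (\<phi> g))}"

definition twisted_classes :: "('a, 'b) monoid_scheme \<Rightarrow> ('a \<Rightarrow> 'a) \<Rightarrow> 'a set set" where
  "twisted_classes G \<phi> = carrier G // twisted_rel G \<phi>"

definition reidemeister :: "('a, 'b) monoid_scheme \<Rightarrow> ('a \<Rightarrow> 'a) \<Rightarrow> enat" where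
  "reidemeister G \<phi> = (if finite (twisted_classes G \<phi>) then enat (card (twisted_classes G \<phi>)) else \<infinity>)"

definition group_center :: "('a, 'b) monoid_scheme \<Rightarrow> 'a set" where
  "group_center G = {z \<in> carrier G. \<forall>g \<in> carrier G. z \<otimes>\<^bsub>G\<^esub> g = g \<otimes>\<^bsub>G\<^esub> z}"

definition top_R_infty :: "('a, 'b) monoid_scheme \<Rightarrow> 'a topology \<Rightarrow> bool" where
  "top_R_infty G T \<longleftrightarrow> (\<forall>\<phi>. \<phi> \<in> iso G G \<and> homeomorphic_map T T \<phi> \<longrightarrow> reidemeister G \<phi> = \<infinity>)"

definition rot :: "real \<Rightarrow> real^2^2" where
  "rot t = vector [vector [cos (2*pi*t), - sin (2*pi*t)], vector [sin (2*pi*t), cos (2*pi*t)]]"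

definition rho :: "real^2^2" where
  "rho = vector [vector [1, 0], vector [0, -1]]"

definition RR2 :: "(real \<times> (real^2)) monoid" where
  "RR2 = \<lparr>carrier = UNIV, mult = (\<lambda>(t, x) (s, y). (t + s, x + rot t *v y)), one = (0, 0)\<rparr>"

definition SO2 :: "(real^2^2) set" where
  "SO2 = {A. orthogonal_matrix A \<and> det A = 1}"

definition SO2R2 :: "((real^2^2) \<times> (real^2)) monoid" where
  "SO2R2 = \<lparr>carrier = SO2 \<times> UNIV, mult = (\<lambda>(A, x) (B, y). (A ** B, x + A *v y)), one = (mat 1, 0)\<rparr>"

text \<open>The quotient map G -> G/Z(G) = SO(2) semidirect R^2.\<close>
definition proj :: "real \<times> (real^2) \<Rightarrow> (real^2^2) \<times> (real^2)" where
  "proj = (\<lambda>(t, x). (rot t, x))"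

definition phi :: "real \<times> (real^2) \<Rightarrow> real \<times> (real^2)" where
  "phi = (\<lambda>(t, x). (- t, 2 *\<^sub>R (rho *v x)))"

end

theory Submission
  imports Defs
begin
lemma one_ne_two2[simp]: "(1::2) \<noteq> 2" "(2::2) \<noteq> 1" by (simp_all add: eq_commute)
lemmas C = vec_eq_iff forall_2 sum_2 matrix_matrix_mult_def matrix_vector_mult_def rot_def rho_def mat_def transpose_def
lemma rot_add: "rot s ** rot t = rot (s + t)"
  by (simp add: C distrib_left cos_add sin_add algebra_simps)
lemma rot_vadd: "rot s *v (rot t *v x) = rot (s + t) *v x"
  by (simp add: matrix_vector_mul_assoc rot_add)
lemma rot0: "rot 0 = mat 1" by (simp add: C)
lemma rho_rho: "rho ** rho = mat 1" by (simp add: C)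
lemma rho_rot: "rho ** rot t = rot (-t) ** rho" by (simp add: C)
lemma det_rot: "det (rot t) = 1" by (simp add: det_2 rot_def power2_eq_square[symmetric])
lemma orth_rot: "orthogonal_matrix (rot t)" by (simp add: orthogonal_matrix C power2_eq_square[symmetric] algebra_simps)
lemma det_rho: "det rho = -1" by (simp add: det_2 rho_def)
lemma orth_rho: "orthogonal_matrix rho" by (simp add: orthogonal_matrix C)

lemma rot_eq_1: "rot t = mat 1 \<longleftrightarrow> (\<exists>k::int. t = of_int k)"
proof
  assume "rot t = mat 1"
  then have "cos (2*pi*t) = 1" by (simp add: C)
  then obtain n :: int where "2*pi*t = real_of_int n * 2 * pi" using cos_one_2pi_int by blast
  then have "t = n" by simp
  then show "\<exists>k::int. t = of_int k" by blast
next
  assume "\<exists>k::int. t = of_int k"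
  then obtain k :: int where "t = k" by blast
  then show "rot t = mat 1" by (simp add: C)
qed
lemma RR2_simps[simp]: "carrier RR2 = UNIV" "one RR2 = (0,0)"
  "(t,x) \<otimes>\<^bsub>RR2\<^esub> (s,y) = (t+s, x + rot t *v y)"
  by (simp_all add: RR2_def)

lemma group_RR2: "group RR2"
proof (rule groupI)
  fix a b c assume "a \<in> carrier RR2" "b \<in> carrier RR2" "c \<in> carrier RR2"
  show "a \<otimes>\<^bsub>RR2\<^esub> b \<otimes>\<^bsub>RR2\<^esub> c = a \<otimes>\<^bsub>RR2\<^esub> (b \<otimes>\<^bsub>RR2\<^esub> c)"
    by (cases a; cases b; cases c) (simp add: matrix_vector_right_distrib rot_vadd algebra_simps)
next
  fix a assume "a \<in> carrier RR2"
  show "\<one>\<^bsub>RR2\<^esub> \<otimes>\<^bsub>RR2\<^esub> a = a" by (cases a) (simp add: rot0)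
  obtain t x where a: "a = (t,x)" by fastforce
  show "\<exists>y\<in>carrier RR2. y \<otimes>\<^bsub>RR2\<^esub> a = \<one>\<^bsub>RR2\<^esub>"
    by (rule bexI[of _ "(-t, - (rot (-t) *v x))"]) (simp_all add: a)
qed auto

lemma inv_RR2: "inv\<^bsub>RR2\<^esub> (t,x) = (-t, - (rot (-t) *v x))"
  by (rule group.inv_equality[OF group_RR2]) auto

lemma SO2_I: "orthogonal_matrix A \<Longrightarrow> det A = 1 \<Longrightarrow> A \<in> SO2" by (simp add: SO2_def)

lemma SO2R2_simps[simp]: "carrier SO2R2 = SO2 \<times> UNIV" "one SO2R2 = (mat 1,0)"
  "(A,x) \<otimes>\<^bsub>SO2R2\<^esub> (B,y) = (A ** B, x + A *v y)"
  by (simp_all add: SO2R2_def)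

lemma SO2_mul: "A \<in> SO2 \<Longrightarrow> B \<in> SO2 \<Longrightarrow> A ** B \<in> SO2"
  by (simp add: SO2_def orthogonal_matrix_mul det_mul)

lemma group_SO2R2: "group SO2R2"
proof (rule groupI)
  fix a b c assume "a \<in> carrier SO2R2" "b \<in> carrier SO2R2" "c \<in> carrier SO2R2"
  show "a \<otimes>\<^bsub>SO2R2\<^esub> b \<otimes>\<^bsub>SO2R2\<^esub> c = a \<otimes>\<^bsub>SO2R2\<^esub> (b \<otimes>\<^bsub>SO2R2\<^esub> c)"
    by (cases a; cases b; cases c) (simp add: matrix_vector_right_distrib matrix_mul_assoc matrix_vector_mul_assoc algebra_simps)
next
  fix a b assume "a \<in> carrier SO2R2" "b \<in> carrier SO2R2"
  then show "a \<otimes>\<^bsub>SO2R2\<^esub> b \<in> carrier SO2R2"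
    by (cases a; cases b) (auto simp: SO2_mul)
next
  show "\<one>\<^bsub>SO2R2\<^esub> \<in> carrier SO2R2" by (simp add: SO2_def orthogonal_matrix_id)
next
  fix a assume aC: "a \<in> carrier SO2R2"
  show "\<one>\<^bsub>SO2R2\<^esub> \<otimes>\<^bsub>SO2R2\<^esub> a = a" by (cases a) simp
  obtain A x where a: "a = (A,x)" by fastforce
  with aC have A: "A \<in> SO2" by simp
  then have "transpose A \<in> SO2" by (simp add: SO2_def orthogonal_matrix_transpose det_transpose)
  moreover have "transpose A ** A = mat 1" using A by (simp add: SO2_def orthogonal_matrix_def)
  ultimately show "\<exists>y\<in>carrier SO2R2. y \<otimes>\<^bsub>SO2R2\<^esub> a = \<one>\<^bsub>SO2R2\<^esub>"
    by (intro bexI[of _ "(transpose A, - (transpose A *v x))"]) (simp_all add: a)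
qed

lemma rot_SO2: "rot t \<in> SO2" by (simp add: SO2_I orth_rot det_rot)

lemma SO2_rot: assumes "A \<in> SO2" shows "\<exists>t. A = rot t"
proof -
  have ho: "transpose A ** A = mat 1" and d: "det A = 1" using assms by (auto simp: SO2_def orthogonal_matrix_def)
  define p where "p = A$1$1" define q where "q = A$1$2" define r where "r = A$2$1" define w where "w = A$2$2"
  have e1: "p*p + r*r = 1" "p*q + r*w = 0" using ho unfolding p_def q_def r_def w_def
    by (simp_all add: C)
  have e2: "p*w - q*r = 1" using d by (simp add: det_2 p_def q_def r_def w_def)
  have bc: "q = -r" 
  proof -
    have "q = q*(p*p+r*r)" using e1 by simp
    also have "\<dots> = p*(p*q+r*w) - r*(p*w - q*r)" by (simp add: algebra_simps)
    finally show ?thesis using e1 e2 by simp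
  qed
  have da: "w = p"
  proof -
    have "w = w*(p*p+r*r)" using e1 by simp
    also have "\<dots> = p*(p*w - q*r) + r*(p*q+r*w)" by (simp add: algebra_simps bc)
    finally show ?thesis using e1 e2 by simp
  qed
  obtain th where th: "p = cos th" "r = sin th" using sincos_total_2pi[of p r] e1 by (auto simp: power2_eq_square)
  have "A = rot (th / (2*pi))"
    using th bc da unfolding p_def q_def r_def w_def by (simp add: C)
  then show ?thesis by blast
qed
lemma proj_hom: "proj \<in> hom RR2 SO2R2"
  by (auto simp: hom_def proj_def rot_SO2 rot_add)

lemma proj_surj: "proj ` carrier RR2 = carrier SO2R2"
proof
  show "proj ` carrier RR2 \<subseteq> carrier SO2R2" by (auto simp: proj_def rot_SO2)
  show "carrier SO2R2 \<subseteq> proj ` carrier RR2"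
  proof
    fix p assume "p \<in> carrier SO2R2"
    then obtain A x where p: "p = (A,x)" "A \<in> SO2" by auto
    then obtain t where "A = rot t" using SO2_rot by blast
    then have "p = proj (t,x)" by (simp add: p proj_def)
    then show "p \<in> proj ` carrier RR2" by simp
  qed
qed

lemma center_RR2: "group_center RR2 = {(of_int k, 0) | k. True}"
proof
  show "group_center RR2 \<subseteq> {(of_int k, 0) | k. True}"
  proof
    fix z assume z: "z \<in> group_center RR2"
    obtain t x where zt: "z = (t,x)" by fastforce
    have "z \<otimes>\<^bsub>RR2\<^esub> (1/2, 0) = (1/2, 0) \<otimes>\<^bsub>RR2\<^esub> z" using z by (simp add: group_center_def)
    then have "x = rot (1/2) *v x" by (simp add: zt)
    then have x0: "x = 0" by (simp add: C)
    have "z \<otimes>\<^bsub>RR2\<^esub> (0, vector [1,0]) = (0, vector [1,0]) \<otimes>\<^bsub>RR2\<^esub> z" using z by (simp add: group_center_def)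
    then have "rot t *v vector [1,0] = vector [1,0]" by (simp add: zt x0)
    then have "cos (2*pi*t) = 1" by (simp add: C)
    then obtain n :: int where "2*pi*t = real_of_int n * 2 * pi" using cos_one_2pi_int by blast
    then have "t = n" by simp
    then show "z \<in> {(of_int k, 0) | k. True}" using zt x0 by blast
  qed
  show "{(of_int k, 0) | k. True} \<subseteq> group_center RR2"
  proof
    fix z assume "z \<in> {(of_int k :: real, 0::real^2) | k. True}"
    then obtain k :: int where z: "z = (of_int k, 0)" by blast
    have "rot (of_int k) = mat 1" using rot_eq_1 by blast
    then show "z \<in> group_center RR2" by (auto simp: group_center_def z)
  qed
qed

lemma kernel_proj: "kernel RR2 SO2R2 proj = group_center RR2"
  unfolding center_RR2 kernel_def by (auto simp: proj_def rot_eq_1)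
lemma mv_neg: "A *v (- x) = - (A *v (x::real^'n))"
  by (simp add: vec_eq_iff matrix_vector_mult_def sum_negf)
lemma cont_mv[continuous_intros]: "continuous_on S f \<Longrightarrow> continuous_on S (\<lambda>x. (A::real^'n^'m) *v f x)"
  using continuous_on_compose[of S f "(*v) A"] matrix_vector_mult_linear_continuous_on
  by (auto simp: o_def)

lemma phi_simp[simp]: "phi (t,x) = (-t, 2 *\<^sub>R (rho *v x))" by (simp add: phi_def)

lemma rho_rot_v: "rho *v (rot t *v y) = rot (-t) *v (rho *v y)"
  by (simp add: matrix_vector_mul_assoc rho_rot)
lemma rho_rho_v: "rho *v (rho *v y) = y"
  by (simp add: matrix_vector_mul_assoc rho_rho)

definition psi :: "real \<times> (real^2) \<Rightarrow> real \<times> (real^2)" where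
  "psi = (\<lambda>(t,x). (-t, (1/2) *\<^sub>R (rho *v x)))"

lemma phi_iso: "phi \<in> iso RR2 RR2"
proof (rule isoI)
  show "phi \<in> hom RR2 RR2"
    by (auto simp: hom_def matrix_vector_right_distrib rho_rot_v matrix_vector_mult_scaleR scaleR_right_distrib)
  show "bij_betw phi (carrier RR2) (carrier RR2)"
    by (rule bij_betwI[where g=psi]) (auto simp: psi_def matrix_vector_mult_scaleR rho_rho_v)
qed

lemma phi_homeo: "homeomorphic_map euclidean euclidean phi"
  unfolding homeomorphic_map_maps
proof (intro exI[of _ psi])
  have e1: "phi = (\<lambda>p. (- fst p, 2 *\<^sub>R (rho *v snd p)))" by (auto simp: phi_def)
  have e2: "psi = (\<lambda>p. (- fst p, (1/2) *\<^sub>R (rho *v snd p)))" by (auto simp: psi_def)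
  show "homeomorphic_maps euclidean euclidean phi psi"
    unfolding homeomorphic_maps_def
    by (auto simp: e1 e2 matrix_vector_mult_scaleR rho_rho_v intro!: continuous_intros)
qed

lemma reid_total:
  assumes "twisted_rel G f = carrier G \<times> carrier G" "carrier G \<noteq> {}"
  shows "reidemeister G f = 1"
proof -
  have "twisted_classes G f = {carrier G}"
    using assms unfolding twisted_classes_def quotient_def by auto
  then show ?thesis by (simp add: reidemeister_def one_enat_def)
qed

lemma twisted_RR2: "twisted_rel RR2 phi = carrier RR2 \<times> carrier RR2"
proof -
  have "\<exists>g. y = g \<otimes>\<^bsub>RR2\<^esub> x \<otimes>\<^bsub>RR2\<^esub> inv\<^bsub>RR2\<^esub> (phi g)" for x y
  proof -
    obtain s b where x: "x = (s,b)" by fastforce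
    obtain u c where y: "y = (u,c)" by fastforce
    define t where "t = (u - s)/2"
    define v where "v = c - rot t *v b"
    define a where "a = (-1/3) *\<^sub>R (v + 2 *\<^sub>R (rot u *v (rho *v v)))"
    have u: "t + s + t = u" by (simp add: t_def)
    have "(t,a) \<otimes>\<^bsub>RR2\<^esub> x \<otimes>\<^bsub>RR2\<^esub> inv\<^bsub>RR2\<^esub> (phi (t,a))
        = (t + s + t, a + rot t *v b - 2 *\<^sub>R (rot (t + s + t) *v (rho *v a)))"
      by (simp add: x inv_RR2 mv_neg rot_vadd matrix_vector_mult_scaleR algebra_simps)
    also have "\<dots> = (u, a + rot t *v b - 2 *\<^sub>R (rot u *v (rho *v a)))" by (simp only: u)
    also have "a - 2 *\<^sub>R (rot u *v (rho *v a)) = v"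
      proof -
      have h: "cos z * cos z = 1 - sin z * sin z" for z :: real
        using sin_cos_squared_add3[of z] by linarith
      show ?thesis unfolding a_def by (simp add: C algebra_simps h) (simp add: field_simps)
    qed
    then have "a + rot t *v b - 2 *\<^sub>R (rot u *v (rho *v a)) = c"
      by (simp add: v_def algebra_simps)
    finally show ?thesis using y by metis
  qed
  then show ?thesis by (auto simp: twisted_rel_def)
qed
lemma twisted_transfer:
  assumes G: "group G" and H: "group H" and h: "h \<in> hom G H" and hs: "h ` carrier G = carrier H"
    and f: "f \<in> carrier G \<rightarrow> carrier G" and comm: "\<forall>g \<in> carrier G. k (h g) = h (f g)"
    and tot: "twisted_rel G f = carrier G \<times> carrier G"
  shows "twisted_rel H k = carrier H \<times> carrier H"
proof -
  interpret gh: group_hom G H h using G H h unfolding group_hom_def group_hom_axioms_def by blast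
  have "(x', y') \<in> twisted_rel H k" if xy': "x' \<in> carrier H" "y' \<in> carrier H" for x' y'
  proof -
    obtain x where x: "x \<in> carrier G" "x' = h x" using xy'(1) hs by blast
    obtain y where y: "y \<in> carrier G" "y' = h y" using xy'(2) hs by blast
    have "(x,y) \<in> twisted_rel G f" using tot x y by simp
    then obtain g where g: "g \<in> carrier G" "y = g \<otimes>\<^bsub>G\<^esub> x \<otimes>\<^bsub>G\<^esub> inv\<^bsub>G\<^esub> (f g)"
      unfolding twisted_rel_def by blast
    have fg: "f g \<in> carrier G" using f g by auto
    have kh: "k (h g) = h (f g)" using comm g by blast
    have "h y = h g \<otimes>\<^bsub>H\<^esub> h x \<otimes>\<^bsub>H\<^esub> inv\<^bsub>H\<^esub> (h (f g))"
      unfolding g(2) using g(1) x(1) fg by simp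
    then have "y' = h g \<otimes>\<^bsub>H\<^esub> x' \<otimes>\<^bsub>H\<^esub> inv\<^bsub>H\<^esub> (k (h g))"
      using x y kh by simp
    moreover have "h g \<in> carrier H" using g by simp
    ultimately show ?thesis using xy' unfolding twisted_rel_def by blast
  qed
  then show ?thesis unfolding twisted_rel_def by blast
qed

definition phi1 :: "(real^2^2) \<times> (real^2) \<Rightarrow> (real^2^2) \<times> (real^2)" where
  "phi1 = (\<lambda>(A,x). (rho ** A ** rho, 2 *\<^sub>R (rho *v x)))"
definition psi1 :: "(real^2^2) \<times> (real^2) \<Rightarrow> (real^2^2) \<times> (real^2)" where
  "psi1 = (\<lambda>(A,x). (rho ** A ** rho, (1/2) *\<^sub>R (rho *v x)))"

lemma rho_conj_SO2: "A \<in> SO2 \<Longrightarrow> rho ** A ** rho \<in> SO2"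
  using orth_rho det_rho by (simp add: SO2_def orthogonal_matrix_mul det_mul)

lemma rho_conj_conj: "rho ** (rho ** A ** rho) ** rho = A"
  by (simp add: C)

lemma phi1_iso: "phi1 \<in> iso SO2R2 SO2R2"
proof (rule isoI)
  have m: "rho ** (A ** B) ** rho = rho ** A ** rho ** (rho ** B ** rho)" for A B :: "real^2^2"
    by (simp add: C algebra_simps)
  have v: "rho *v (A *v y) = (rho ** A ** rho) *v (rho *v y)" for A :: "real^2^2" and y
    by (simp add: C algebra_simps)
  show "phi1 \<in> hom SO2R2 SO2R2"
  proof (rule homI)
    fix a assume "a \<in> carrier SO2R2" then show "phi1 a \<in> carrier SO2R2"
      by (cases a) (simp add: phi1_def rho_conj_SO2)
  next
    fix a b assume "a \<in> carrier SO2R2" "b \<in> carrier SO2R2"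
    show "phi1 (a \<otimes>\<^bsub>SO2R2\<^esub> b) = phi1 a \<otimes>\<^bsub>SO2R2\<^esub> phi1 b"
    proof (cases a, cases b)
      fix A x B y assume ab: "a = (A,x)" "b = (B,y)"
      show ?thesis unfolding ab phi1_def
        by (simp only: SO2R2_simps prod.case m v matrix_vector_right_distrib
            matrix_vector_mult_scaleR scaleR_right_distrib)
    qed
  qed
  show "bij_betw phi1 (carrier SO2R2) (carrier SO2R2)"
    by (rule bij_betwI[where g=psi1])
       (auto simp: phi1_def psi1_def rho_conj_SO2 rho_conj_conj matrix_vector_mult_scaleR rho_rho_v)
qed

lemma rho_rot_rho: "rho ** rot t ** rho = rot (-t)"
  by (simp add: C)

lemma phi1_proj: "\<forall>g \<in> carrier RR2. phi1 (proj g) = proj (phi g)"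
  by (auto simp: phi1_def proj_def rho_rot_rho)

lemma lin_cont:
  fixes f :: "'a::euclidean_space \<Rightarrow> 'b::euclidean_space"
  assumes "linear f" shows "continuous_on S f"
  using assms by (simp add: linear_continuous_on linear_linear)

lemma cont_lin1: "continuous_on (carrier SO2R2) (\<lambda>p. (rho ** fst p ** rho, c *\<^sub>R (rho *v snd p)))"
  by (rule lin_cont, rule linearI) (auto simp: C algebra_simps)
lemma phi1_homeo: "homeomorphic_map (subtopology euclidean (carrier SO2R2))
                              (subtopology euclidean (carrier SO2R2)) phi1"
  unfolding homeomorphic_map_maps
proof (intro exI[of _ psi1])
  have e1: "phi1 = (\<lambda>p. (rho ** fst p ** rho, 2 *\<^sub>R (rho *v snd p)))" by (auto simp: phi1_def)
  have e2: "psi1 = (\<lambda>p. (rho ** fst p ** rho, (1/2) *\<^sub>R (rho *v snd p)))" by (auto simp: psi1_def)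
  have c1: "continuous_on (carrier SO2R2) phi1" unfolding e1 by (rule cont_lin1)
  have c2: "continuous_on (carrier SO2R2) psi1" unfolding e2 by (rule cont_lin1[of "1/2"])
  have m1: "phi1 \<in> carrier SO2R2 \<rightarrow> carrier SO2R2" by (auto simp: phi1_def rho_conj_SO2)
  have m2: "psi1 \<in> carrier SO2R2 \<rightarrow> carrier SO2R2" by (auto simp: psi1_def rho_conj_SO2)
  have i1: "psi1 (phi1 p) = p" for p
    by (cases p) (simp add: phi1_def psi1_def rho_conj_conj matrix_vector_mult_scaleR rho_rho_v)
  have i2: "phi1 (psi1 p) = p" for p
    by (cases p) (simp add: phi1_def psi1_def rho_conj_conj matrix_vector_mult_scaleR rho_rho_v)
  show "homeomorphic_maps (subtopology euclidean (carrier SO2R2)) (subtopology euclidean (carrier SO2R2)) phi1 psi1"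
    unfolding homeomorphic_maps_def using c1 c2 m1 m2 i1 i2 by simp
qed

theorem mainTheorem15:
  shows "phi \<in> iso RR2 RR2
    \<and> homeomorphic_map euclidean euclidean phi
    \<and> reidemeister RR2 phi = 1
    \<and> group_center RR2 = {(of_int k, 0) | k. True}
    \<and> proj \<in> hom RR2 SO2R2 \<and> proj ` carrier RR2 = carrier SO2R2
    \<and> kernel RR2 SO2R2 proj = group_center RR2
    \<and> (\<exists>phi1. phi1 \<in> iso SO2R2 SO2R2
          \<and> (\<forall>g \<in> carrier RR2. phi1 (proj g) = proj (phi g))
          \<and> homeomorphic_map (subtopology euclidean (carrier SO2R2))
                              (subtopology euclidean (carrier SO2R2)) phi1
          \<and> reidemeister SO2R2 phi1 = 1)
    \<and> \<not> top_R_infty RR2 euclidean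
    \<and> \<not> top_R_infty SO2R2 (subtopology euclidean (carrier SO2R2))"
proof -
  have r1: "reidemeister RR2 phi = 1" by (rule reid_total[OF twisted_RR2]) simp
  have t2: "twisted_rel SO2R2 phi1 = carrier SO2R2 \<times> carrier SO2R2"
    by (rule twisted_transfer[OF group_RR2 group_SO2R2 proj_hom proj_surj _ phi1_proj twisted_RR2]) simp
  have ne: "carrier SO2R2 \<noteq> {}" using rot_SO2 by auto
  have r2: "reidemeister SO2R2 phi1 = 1" by (rule reid_total[OF t2 ne])
  have n1: "\<not> top_R_infty RR2 euclidean"
    unfolding top_R_infty_def using phi_iso phi_homeo r1 by (metis infinity_ne_i1)
  have n2: "\<not> top_R_infty SO2R2 (subtopology euclidean (carrier SO2R2))"
    unfolding top_R_infty_def using phi1_iso phi1_homeo r2 by (metis infinity_ne_i1)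
  show ?thesis
    using phi_iso phi_homeo r1 center_RR2 proj_hom proj_surj kernel_proj phi1_iso phi1_proj phi1_homeo r2 n1 n2
    by blast
qed
end
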